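(* If the Sorgenfrey line is homeomorphic to a subspace of a Hausdorff compact space $\langle X,\tau\rangle$, then $\langle X,\tau\rangle$ is not a continuous open image of the Sorgenfrey line. In particular, the double-arrow space is not a continuous open image of the Sorgenfrey line.
   Context: The Sorgenfrey line is $\mathbb R$ with topology generated by $\{[a,b)\}$; "continuous open image" means image under a continuous open surjection. The double-arrow space is $M=\{\langle x,0\rangle:0<x\le1\}\cup\{\langle x,1\rangle:0\le x<1\}$ with the order topology of the lexicographic order. *)

theory Defs
  imports "HOL-Analysis.Analysis"
begin

definition sorgenfrey :: "real topology" where
  "sorgenfrey = topology_generated_by {{a..<b} | a b. a < b}"

definition continuous_open_image :: "'a topology \<Rightarrow> 'b topology \<Rightarrow> bool" where
  "continuous_open_image X Y \<longleftrightarrow>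
     (\<exists>f. continuous_map X Y f \<and> open_map X Y f \<and> f ` topspace X = topspace Y)"

definition lex_less :: "real \<times> nat \<Rightarrow> real \<times> nat \<Rightarrow> bool" where
  "lex_less p q \<longleftrightarrow> fst p < fst q \<or> (fst p = fst q \<and> snd p < snd q)"

definition double_arrow_set :: "(real \<times> nat) set" where
  "double_arrow_set = {(x, 0) | x. 0 < x \<and> x \<le> 1} \<union> {(x, 1) | x. 0 \<le> x \<and> x < 1}"

definition double_arrow :: "(real \<times> nat) topology" where
  "double_arrow = topology_generated_by
     ({double_arrow_set}
      \<union> {{p \<in> double_arrow_set. lex_less p a} | a. a \<in> double_arrow_set}
      \<union> {{p \<in> double_arrow_set. lex_less a p} | a. a \<in> double_arrow_set})"

end

theory Submission
  imports Defs
begin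

lemma sorg_topspace [simp]: "topspace sorgenfrey = UNIV"
proof -
  have "x \<in> \<Union>{{a..<b} | a b. a < b}" for x :: real
  proof (rule UnionI[of "{x..<x+1}"])
    show "{x..<x+1} \<in> {{a..<b} | a b. a < b}" by (rule CollectI, rule exI[of _ x], rule exI[of _ "x+1"]) auto
  qed auto
  then show ?thesis unfolding sorgenfrey_def by auto
qed

lemma sorg_open_right:
  assumes "openin sorgenfrey U" "x \<in> U"
  shows "\<exists>d>0. {x..<x+d} \<subseteq> U"
proof -
  have "generate_topology_on {{a..<b} | a b. a < b} U"
    using assms(1) unfolding sorgenfrey_def by (rule openin_topology_generated_by)
  then show ?thesis using assms(2)
  proof (induction arbitrary: x)
    case Empty then show ?case by simp
  next
    case (Int a b)
    then obtain d1 d2 where "d1>0" "{x..<x+d1} \<subseteq> a" "d2>0" "{x..<x+d2} \<subseteq> b" by blast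
    then show ?case by (intro exI[of _ "min d1 d2"]) (auto simp: subset_iff)
  next
    case (UN K)
    then obtain k where "k \<in> K" "x \<in> k" by blast
    with UN obtain d where "d>0" "{x..<x+d} \<subseteq> k" by blast
    then show ?case using \<open>k \<in> K\<close> by blast
  next
    case (Basis s)
    then obtain a b where s: "s = {a..<b}" "a<b" by blast
    with Basis show ?case by (intro exI[of _ "b - x"]) auto
  qed
qed

lemma sorg_open_basic: "openin sorgenfrey {a..<b}"
proof (cases "a < b")
  case True then show ?thesis unfolding sorgenfrey_def
    by (intro topology_generated_by_Basis) blast
next
  case False then show ?thesis by simp
qed

lemma sorg_openI:
  assumes "\<And>x. x \<in> U \<Longrightarrow> \<exists>a b. x \<in> {a..<b} \<and> {a..<b} \<subseteq> U"
  shows "openin sorgenfrey U"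
proof -
  have "U = \<Union>{{a..<b} | a b. {a..<b} \<subseteq> U}" using assms by blast
  moreover have "openin sorgenfrey (\<Union>{{a..<b} | a b. {a..<b} \<subseteq> U})"
    by (rule openin_Union) (auto simp: sorg_open_basic)
  ultimately show ?thesis by simp
qed

lemma sorg_open_ivl: "openin sorgenfrey {a<..<b}"
  by (rule sorg_openI) (metis atLeastLessThan_iff greaterThanLessThan_iff order.refl subsetI order_less_le_trans)

lemma sorg_open_atLeast: "openin sorgenfrey {a..}"
  by (rule sorg_openI, rule_tac x=a in exI, rule_tac x="x+1" in exI) auto

lemma sorg_open_lessThan: "openin sorgenfrey {..<a}"
  by (rule sorg_openI, rule_tac x=x in exI, rule_tac x="a" in exI) auto

lemma sorg_cont_right:
  assumes "continuous_map sorgenfrey X f" "openin X W" "f t \<in> W"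
  shows "\<exists>d>0. \<forall>x. t \<le> x \<and> x < t + d \<longrightarrow> f x \<in> W"
proof -
  have "openin sorgenfrey {x \<in> topspace sorgenfrey. f x \<in> W}"
    using assms(1,2) by (simp add: continuous_map_def)
  then obtain d where "d>0" "{t..<t+d} \<subseteq> {x \<in> topspace sorgenfrey. f x \<in> W}"
    using sorg_open_right assms(3) by (metis (mono_tags, lifting) UNIV_I mem_Collect_eq sorg_topspace)
  then show ?thesis by (intro exI[of _ d]) (auto simp: subset_iff)
qed


lemma notin_closure_ofI:
  assumes "openin X T" "y \<in> T" "T \<inter> S = {}"
  shows "y \<notin> X closure_of S"
  using assms by (auto simp: in_closure_of)

locale SL =
  fixes X :: "'a topology" and e f :: "real \<Rightarrow> 'a"
  assumes cpt: "compact_space X" and hd: "Hausdorff_space X"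
  and fc: "continuous_map sorgenfrey X f" and fo: "open_map sorgenfrey X f"
  and fs: "f ` UNIV = topspace X"
  and eX: "\<And>r. 0 \<le> r \<Longrightarrow> r < 1 \<Longrightarrow> e r \<in> topspace X"
  and einj: "inj_on e {0..<1}"
  and e1: "\<And>r W. 0 \<le> r \<Longrightarrow> r < 1 \<Longrightarrow> openin X W \<Longrightarrow> e r \<in> W \<Longrightarrow>
              \<exists>d>0. \<forall>x. r \<le> x \<and> x < r + d \<and> x < 1 \<longrightarrow> e x \<in> W"
  and e2a: "\<And>r. 0 \<le> r \<Longrightarrow> r < 1 \<Longrightarrow> e r \<notin> X closure_of (e ` {0..<r})"
  and e2b: "\<And>r s. 0 \<le> r \<Longrightarrow> r < s \<Longrightarrow> r < 1 \<Longrightarrow> e r \<notin> X closure_of (e ` {s..<1})"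
begin

definition "E0 = e ` {0..<1}"
definition "G a b = X closure_of (e ` {x. a \<le> x \<and> x < b \<and> x < 1})"
definition "Y = G 0 1"
definition "Z = {t. f t \<in> Y}"

lemma G_closed: "closedin X (G a b)"
  by (simp add: G_def)

lemma G_top: "G a b \<subseteq> topspace X"
  by (simp add: G_def closure_of_subset_topspace)

lemma G_mono: "a' \<le> a \<Longrightarrow> b \<le> b' \<Longrightarrow> G a b \<subseteq> G a' b'"
  unfolding G_def by (rule closure_of_mono) auto

lemma G_split: "G a b \<subseteq> G a c \<union> G c b"
proof -
  have "e ` {x. a \<le> x \<and> x < b \<and> x < 1} \<subseteq> e ` {x. a \<le> x \<and> x < c \<and> x < 1} \<union> e ` {x. c \<le> x \<and> x < b \<and> x < 1}"
  proof
    fix y assume "y \<in> e ` {x. a \<le> x \<and> x < b \<and> x < 1}"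
    then obtain x where x: "y = e x" "a \<le> x" "x < b" "x < 1" by blast
    show "y \<in> e ` {x. a \<le> x \<and> x < c \<and> x < 1} \<union> e ` {x. c \<le> x \<and> x < b \<and> x < 1}"
    proof (cases "x < c")
      case True then show ?thesis using x by blast
    next
      case False then show ?thesis using x by (simp add: not_less)
    qed
  qed
  then have "X closure_of (e ` {x. a \<le> x \<and> x < b \<and> x < 1}) \<subseteq> X closure_of (e ` {x. a \<le> x \<and> x < c \<and> x < 1} \<union> e ` {x. c \<le> x \<and> x < b \<and> x < 1})"
    by (rule closure_of_mono)
  then show ?thesis unfolding G_def closure_of_Un .
qed

lemma e_in_G: "0 \<le> a \<Longrightarrow> a \<le> x \<Longrightarrow> x < b \<Longrightarrow> x < 1 \<Longrightarrow> e x \<in> G a b"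
  unfolding G_def
  by (rule subsetD[OF closure_of_subset]) (auto intro: eX)

lemma G_empty: "b \<le> a \<or> 1 \<le> a \<Longrightarrow> G a b = {}"
proof -
  assume "b \<le> a \<or> 1 \<le> a"
  then have "{x. a \<le> x \<and> x < b \<and> x < 1} = {}" by auto
  then show ?thesis by (metis G_def closure_of_empty image_empty)
qed

lemma E0_Y: "E0 = e ` {x. 0 \<le> x \<and> x < 1 \<and> x < 1}"
  by (auto simp: E0_def)

lemma Y_closure: "Y = X closure_of E0"
  by (simp add: Y_def G_def E0_Y)

lemma E0_sub_Y: "E0 \<subseteq> Y"
  unfolding Y_closure by (rule closure_of_subset) (auto simp: E0_def intro: eX)

lemma Y_top: "Y \<subseteq> topspace X"
  by (simp add: Y_def G_top)

lemma G_sub_Y: "0 \<le> a \<Longrightarrow> G a b \<subseteq> Y"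
  unfolding Y_def G_def by (rule closure_of_mono) auto

lemma e_notin_F: "0 \<le> r \<Longrightarrow> r < 1 \<Longrightarrow> e r \<notin> G 0 r"
proof -
  assume "0 \<le> r" "r < 1"
  moreover have "{x. 0 \<le> x \<and> x < r \<and> x < 1} = {0..<r}" using \<open>r<1\<close> by auto
  ultimately show ?thesis using e2a by (simp add: G_def)
qed

lemma e_notin_G2: "0 \<le> r \<Longrightarrow> r < s \<Longrightarrow> r < 1 \<Longrightarrow> e r \<notin> G s b"
proof -
  assume a: "0 \<le> r" "r < s" "r < 1"
  have "G s b \<subseteq> X closure_of (e ` {s..<1})"
    unfolding G_def by (rule closure_of_mono) auto
  then show ?thesis using e2b[OF a] by blast
qed

lemma Hsep:
  assumes "x \<in> topspace X" "y \<in> topspace X" "x \<noteq> y"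
  obtains U V where "openin X U" "openin X V" "x \<in> U" "y \<in> V" "U \<inter> V = {}"
  using hd assms unfolding Hausdorff_space_def disjnt_def by metis

lemma classify:
  assumes "y \<in> Y"
  shows "(\<exists>r. 0 \<le> r \<and> r < 1 \<and> y = e r) \<or>
         (\<exists>l. 0 < l \<and> l \<le> 1 \<and> y \<in> G 0 l \<and> (\<forall>l'<l. y \<notin> G 0 l') \<and> y \<notin> E0)"
proof -
  define S where "S = {r. y \<in> G 0 r}"
  have "1 \<in> S" using assms by (simp add: S_def Y_def)
  have pos: "r \<in> S \<Longrightarrow> 0 < r" for r
    using G_empty[of r 0] by (force simp: S_def)
  have bdd: "bdd_below S" using pos by (meson bdd_below.I less_imp_le)
  define l where "l = Inf S"
  have l1: "l \<le> 1" unfolding l_def by (rule cInf_lower[OF \<open>1 \<in> S\<close> bdd])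
  have l0: "0 \<le> l" unfolding l_def using \<open>1 \<in> S\<close> pos
    by (metis cInf_greatest empty_iff less_imp_le)
  have A: "y \<in> G 0 r" if "l < r" for r
  proof -
    obtain r' where "r' \<in> S" "r' < r"
      using \<open>l < r\<close> \<open>1 \<in> S\<close> bdd unfolding l_def by (metis cInf_lessD empty_iff)
    then show ?thesis using G_mono[of 0 0 r' r] by (auto simp: S_def)
  qed
  have B: "y \<notin> G 0 r" if "r < l" for r
  proof
    assume "y \<in> G 0 r"
    then have "l \<le> r" unfolding l_def using bdd by (intro cInf_lower) (auto simp: S_def)
    with that show False by simp
  qed
  show ?thesis
  proof (cases "y \<in> G 0 l")
    case True
    have "0 < l"
    proof (rule ccontr)
      assume "\<not> 0 < l"
      then have "G 0 l = {}" by (intro G_empty) simp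
      then show False using True by simp
    qed
    moreover have "y \<notin> E0"
    proof
      assume "y \<in> E0"
      then obtain s where s: "0 \<le> s" "s < 1" "y = e s" by (auto simp: E0_def)
      show False
      proof (cases "l \<le> s")
        case True
        then show False using \<open>y \<in> G 0 l\<close> G_mono[of 0 0 l s] e_notin_F[OF s(1,2)] s(3) by auto
      next
        case False
        have "e s \<in> G 0 ((s+l)/2)" using False s by (intro e_in_G) auto
        then show False using B[of "(s+l)/2"] False s(3) by auto
      qed
    qed
    ultimately show ?thesis using True l1 B by blast
  next
    case False
    have "l < 1" using False l1 assms by (cases "l = 1") (auto simp: Y_def)
    have "y = e l"
    proof (rule ccontr)
      assume ne: "y \<noteq> e l"
      have yt: "y \<in> topspace X" using assms Y_top by blast
      obtain U V where UV: "openin X U" "openin X V" "y \<in> U" "e l \<in> V" "U \<inter> V = {}"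
        using Hsep[OF yt eX[OF l0 \<open>l<1\<close>] ne] by blast
      obtain d where d: "d>0" "\<forall>x. l \<le> x \<and> x < l + d \<and> x < 1 \<longrightarrow> e x \<in> V"
        using e1[OF l0 \<open>l<1\<close> UV(2,4)] by blast
      have "y \<in> G 0 (l+d)" using A d by simp
      then have "y \<in> G l (l+d)" using G_split[of 0 "l+d" l] False by blast
      moreover have "y \<notin> G l (l+d)" unfolding G_def
        by (rule notin_closure_ofI[OF UV(1,3)]) (use d UV(5) in auto)
      ultimately show False by simp
    qed
    then show ?thesis using l0 \<open>l<1\<close> by blast
  qed
qed


lemma f_top: "f x \<in> topspace X"
  using fs by auto

lemma f_right: "openin X W \<Longrightarrow> f t \<in> W \<Longrightarrow> \<exists>d>0. \<forall>x. t \<le> x \<and> x < t + d \<longrightarrow> f x \<in> W"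
  using sorg_cont_right[OF fc] by blast

lemma f_open_ivl: "openin X (f ` {a<..<b})"
  using fo sorg_open_ivl by (simp add: open_map_def)

lemma f_open_basic: "openin X (f ` {a..<b})"
  using fo sorg_open_basic by (simp add: open_map_def)

lemma avoid_closed:
  assumes "closedin X K" "f t \<notin> K"
  shows "\<exists>d>0. \<forall>x. t \<le> x \<and> x < t + d \<longrightarrow> f x \<notin> K"
proof -
  have "openin X (topspace X - K)" using assms(1) by (simp add: openin_diff)
  moreover have "f t \<in> topspace X - K" using assms(2) f_top by simp
  ultimately obtain d where "d>0" "\<forall>x. t \<le> x \<and> x < t + d \<longrightarrow> f x \<in> topspace X - K"
    using f_right by meson
  then show ?thesis by auto
qed

lemma arch_n: "0 < (d::real) \<Longrightarrow> \<exists>n::nat. 0 < n \<and> 1 / real n < d"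
  using ex_inverse_of_nat_less by (metis inverse_eq_divide)

lemma window: "0 \<le> (r::real) \<Longrightarrow> \<exists>k::nat. real k \<le> r * real n \<and> r * real n < real k + 1"
proof -
  assume "0 \<le> r"
  then have "0 \<le> r * real n" by simp
  then show ?thesis
    by (intro exI[of _ "nat \<lfloor>r * real n\<rfloor>"]) (auto simp: of_nat_nat)
qed

definition "Pr n k t r \<longleftrightarrow> 0 < n \<and> 0 \<le> r \<and> r < 1 \<and> f t = e r \<and> real k \<le> r * real n \<and> r * real n < real k + 1
   \<and> (\<forall>x. t \<le> x \<and> x < t + 1/real n \<longrightarrow> f x \<notin> G 0 r)"

definition "Ml n k t l \<longleftrightarrow> 0 < n \<and> f t \<notin> E0 \<and> 0 < l \<and> l \<le> 1 \<and> f t \<in> G 0 l \<and> (\<forall>l'<l. f t \<notin> G 0 l')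
   \<and> real k \<le> l * real n \<and> l * real n < real k + 1
   \<and> (\<forall>x. t \<le> x \<and> x < t + 1/real n \<longrightarrow> f x \<notin> G l (l + 1/real n))"

lemma cover:
  assumes "t \<in> Z"
  shows "\<exists>n k. (\<exists>r. Pr n k t r) \<or> (\<exists>l. Ml n k t l)"
proof -
  have "f t \<in> Y" using assms by (simp add: Z_def)
  from classify[OF this] show ?thesis
  proof
    assume "\<exists>r. 0 \<le> r \<and> r < 1 \<and> f t = e r"
    then obtain r where r: "0 \<le> r" "r < 1" "f t = e r" by blast
    obtain d where d: "d>0" "\<forall>x. t \<le> x \<and> x < t + d \<longrightarrow> f x \<notin> G 0 r"
      using avoid_closed[OF G_closed, of t 0 r] e_notin_F[OF r(1,2)] r(3) by auto
    obtain n::nat where n: "0 < n" "1 / real n < d" using arch_n[OF d(1)] by blast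
    obtain k::nat where k: "real k \<le> r * real n" "r * real n < real k + 1" using window[OF r(1)] by blast
    have "\<forall>x. t \<le> x \<and> x < t + 1/real n \<longrightarrow> f x \<notin> G 0 r"
    proof (intro allI impI)
      fix x assume "t \<le> x \<and> x < t + 1/real n"
      then have "t \<le> x \<and> x < t + d" using n(2) by linarith
      then show "f x \<notin> G 0 r" using d(2) by blast
    qed
    then have "Pr n k t r" unfolding Pr_def using n(1) k r by blast
    then show ?thesis by blast
  next
    assume "\<exists>l. 0 < l \<and> l \<le> 1 \<and> f t \<in> G 0 l \<and> (\<forall>l'<l. f t \<notin> G 0 l') \<and> f t \<notin> E0"
    then obtain l where l: "0 < l" "l \<le> 1" "f t \<in> G 0 l" "\<forall>l'<l. f t \<notin> G 0 l'" "f t \<notin> E0" by blast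
    obtain n0::nat where n0: "0 < n0" "f t \<notin> G l (l + 1/real n0)"
    proof (cases "l < 1")
      case False
      then have "G l (l + 1/real (1::nat)) = {}" by (intro G_empty) simp
      then show ?thesis using that[of 1] by simp
    next
      case True
      have "e l \<in> E0" using True l(1) by (simp add: E0_def)
      then have ne: "f t \<noteq> e l" using l(5) by auto
      obtain U V where UV: "openin X U" "openin X V" "f t \<in> U" "e l \<in> V" "U \<inter> V = {}"
        using Hsep[OF f_top eX ne] l(1) True by auto
      obtain d where d: "d>0" "\<forall>x. l \<le> x \<and> x < l + d \<and> x < 1 \<longrightarrow> e x \<in> V"
        using e1[of l V] UV l(1) True by auto
      obtain n::nat where n: "0 < n" "1 / real n < d" using arch_n[OF d(1)] by blast
      have "f t \<notin> G l (l + 1/real n)" unfolding G_def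
      proof (rule notin_closure_ofI[OF UV(1,3)])
        show "U \<inter> e ` {x. l \<le> x \<and> x < l + 1 / real n \<and> x < 1} = {}"
        proof (rule equals0I)
          fix y assume "y \<in> U \<inter> e ` {x. l \<le> x \<and> x < l + 1 / real n \<and> x < 1}"
          then obtain x where x: "y \<in> U" "y = e x" "l \<le> x" "x < l + 1/real n" "x < 1" by blast
          then have "x < l + d" using n(2) by linarith
          then have "e x \<in> V" using d(2) x by blast
          then show False using x UV(5) by blast
        qed
      qed
      then show ?thesis using that n by blast
    qed
    obtain d' where d': "d'>0" "\<forall>x. t \<le> x \<and> x < t + d' \<longrightarrow> f x \<notin> G l (l + 1/real n0)"
      using avoid_closed[OF G_closed n0(2)] by blast
    have "0 < min d' (1/real n0)" using d' n0 by simp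
    then obtain m::nat where m: "0 < m" "1 / real m < min d' (1/real n0)" using arch_n by blast
    have sub: "G l (l + 1/real m) \<subseteq> G l (l + 1/real n0)"
      using m by (intro G_mono) auto
    have "0 \<le> l" using l(1) by simp
    obtain k::nat where k: "real k \<le> l * real m" "l * real m < real k + 1" using window[OF \<open>0 \<le> l\<close>] by blast
    have "\<forall>x. t \<le> x \<and> x < t + 1/real m \<longrightarrow> f x \<notin> G l (l + 1/real m)"
    proof (intro allI impI)
      fix x assume "t \<le> x \<and> x < t + 1/real m"
      moreover have "1/real m < d'" using m(2) by simp
      ultimately have "t \<le> x \<and> x < t + d'" by linarith
      then show "f x \<notin> G l (l + 1/real m)" using d' sub by blast
    qed
    then have "Ml m k t l" unfolding Ml_def using m k l by blast
    then show ?thesis by blast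
  qed
qed

lemma P_mono:
  assumes "Pr n k t r" "Pr n k' t' r'" "t \<le> t'" "t' < t + 1/real n"
  shows "r \<le> r'"
proof (rule ccontr)
  assume "\<not> r \<le> r'"
  then have "e r' \<in> G 0 r" using assms(2) by (intro e_in_G) (auto simp: Pr_def)
  moreover have "f t' \<notin> G 0 r" using assms(1,3,4) by (auto simp: Pr_def)
  ultimately show False using assms(2) by (simp add: Pr_def)
qed

lemma M_mono:
  assumes "Ml n k u l" "Ml n k u' l'" "u \<le> u'" "u' < u + 1/real n"
  shows "l' \<le> l"
proof (rule ccontr)
  assume "\<not> l' \<le> l"
  then have ll: "l < l'" by simp
  have n: "0 < n" using assms(1) by (simp add: Ml_def)
  have "real k \<le> l * real n" using assms(1) by (simp add: Ml_def)
  moreover have "l' * real n < real k + 1" using assms(2) by (simp add: Ml_def)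
  ultimately have "l' * real n < l * real n + 1" by linarith
  then have "l' < l + 1/real n" using n by (simp add: field_simps)
  have "f u' \<in> G 0 l'" using assms(2) by (simp add: Ml_def)
  then have "f u' \<in> G 0 l \<union> G l l'" using G_split by blast
  moreover have "f u' \<notin> G 0 l" using assms(2) ll by (simp add: Ml_def)
  ultimately have "f u' \<in> G l l'" by blast
  then have "f u' \<in> G l (l + 1/real n)" using G_mono[of l l l' "l + 1/real n"] \<open>l' < l + 1/real n\<close> by auto
  moreover have "f u' \<notin> G l (l + 1/real n)" using assms(1,3,4) by (simp add: Ml_def)
  ultimately show False by simp
qed


lemma NRI:
  assumes "t \<in> Z" "0 < d"
  shows "\<exists>x. x \<in> Z \<and> t < x \<and> x < t + d"
proof -
  define Ob where "Ob = f ` {t..<t+d}"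
  have Ob: "openin X Ob" unfolding Ob_def by (rule f_open_basic)
  have ftO: "f t \<in> Ob" unfolding Ob_def using assms(2) by simp
  have ftY: "f t \<in> Y" using assms(1) by (simp add: Z_def)
  obtain y where y: "y \<in> Ob" "y \<in> Y" "y \<noteq> f t"
  proof (cases "f t \<in> E0")
    case True
    then obtain s where s: "0 \<le> s" "s < 1" "f t = e s" by (auto simp: E0_def)
    obtain d1 where d1: "d1 > 0" "\<forall>x. s \<le> x \<and> x < s + d1 \<and> x < 1 \<longrightarrow> e x \<in> Ob"
      using e1[OF s(1,2) Ob] ftO s(3) by auto
    define mm where "mm = min d1 (1 - s)"
    define x where "x = s + mm / 2"
    have m: "0 < mm" "mm \<le> d1" "mm \<le> 1 - s" using d1 s unfolding mm_def by auto
    have x1: "s < x" unfolding x_def using m by linarith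
    have x2: "x < s + d1" unfolding x_def using m by linarith
    have x3: "x < 1" unfolding x_def using m by linarith
    note x = x1 x2 x3
    have "e x \<in> Ob" using d1(2) x by auto
    moreover have "e x \<in> Y" using E0_sub_Y x s by (auto simp: E0_def)
    moreover have "e x \<noteq> e s"
    proof
      assume "e x = e s"
      then have "x = s" using einj x s by (auto simp: inj_on_def)
      then show False using x by simp
    qed
    ultimately show ?thesis using that s(3) by metis
  next
    case False
    have "f t \<in> X closure_of E0" using ftY by (simp add: Y_closure)
    then obtain y where "y \<in> E0" "y \<in> Ob" using Ob ftO by (auto simp: in_closure_of)
    then show ?thesis using that False E0_sub_Y by blast
  qed
  then obtain x where x: "t \<le> x" "x < t + d" "y = f x" unfolding Ob_def by auto
  have "x \<noteq> t" using x y by auto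
  then show ?thesis using x y by (intro exI[of _ x]) (auto simp: Z_def)
qed

lemma dense_E0:
  assumes "z \<in> Z" "a < z" "z < b"
  shows "\<exists>x. a < x \<and> x < b \<and> f x \<in> E0"
proof -
  define Ob where "Ob = f ` {a<..<b}"
  have Ob: "openin X Ob" unfolding Ob_def by (rule f_open_ivl)
  have "f z \<in> Ob" unfolding Ob_def using assms by simp
  moreover have "f z \<in> X closure_of E0" using assms(1) by (simp add: Y_closure Z_def)
  ultimately obtain y where "y \<in> E0" "y \<in> Ob" using Ob by (auto simp: in_closure_of)
  then show ?thesis unfolding Ob_def by auto
qed

lemma noLC:
  assumes U: "openin X U" and UY: "U \<inter> Y \<subseteq> E0" and r: "0 \<le> r" "r < 1" "e r \<in> U"
  shows False
proof -
  have reg: "regular_space X" using cpt hd by (rule compact_Hausdorff_imp_regular_space)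
  have "closedin X (topspace X - U) \<and> e r \<in> topspace X - (topspace X - U)"
    using U r eX by (auto simp: closedin_diff)
  then obtain N where N: "openin X N" "e r \<in> N" "disjnt (topspace X - U) (X closure_of N)"
    using reg unfolding regular_space by blast
  have NU: "X closure_of N \<subseteq> U"
  proof
    fix x assume x: "x \<in> X closure_of N"
    then have "x \<in> topspace X" using closure_of_subset_topspace[of X N] by blast
    moreover have "x \<notin> topspace X - U" using N(3) x unfolding disjnt_def by blast
    ultimately show "x \<in> U" by blast
  qed
  obtain d where d: "d > 0" "\<forall>x. r \<le> x \<and> x < r + d \<and> x < 1 \<longrightarrow> e x \<in> N"
    using e1[OF r(1,2) N(1,2)] by blast
  define c where "c = min (r + d) 1"
  have c: "r < c" "c \<le> 1" using d r unfolding c_def by auto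
  have eN: "e x \<in> N" if "r \<le> x" "x < c" for x using d(2) that unfolding c_def by auto
  define K where "K = X closure_of N \<inter> Y"
  have "closedin X K" unfolding K_def Y_def by (intro closedin_Int closedin_closure_of G_closed)
  then have Kc: "compactin X K" by (rule closedin_compact_space[OF cpt])
  have KE: "K \<subseteq> E0" using NU UY unfolding K_def by blast
  have loc: "\<exists>V a. openin X V \<and> y \<in> V \<and> a < c \<and> (\<forall>x. a \<le> x \<and> x < c \<longrightarrow> e x \<notin> V)" if "y \<in> K" for y
  proof -
    have "y \<in> e ` {0..<1}" using KE that unfolding E0_def by blast
    then obtain s where s: "0 \<le> s" "s < 1" "y = e s" by auto
    show ?thesis
    proof (cases "c \<le> s")
      case True
      have "openin X (topspace X - G 0 s)" using G_closed by (simp add: openin_diff)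
      moreover have "y \<in> topspace X - G 0 s" using s eX e_notin_F by auto
      moreover have "\<forall>x. r \<le> x \<and> x < c \<longrightarrow> e x \<notin> topspace X - G 0 s"
      proof (intro allI impI)
        fix x assume "r \<le> x \<and> x < c"
        then have "e x \<in> G 0 s" using True r c by (intro e_in_G) auto
        then show "e x \<notin> topspace X - G 0 s" by simp
      qed
      ultimately show ?thesis using c by blast
    next
      case False
      define s' where "s' = (s + c) / 2"
      have s': "s < s'" "s' < c" using False unfolding s'_def by auto
      have "openin X (topspace X - G s' 1)" using G_closed by (simp add: openin_diff)
      moreover have "y \<in> topspace X - G s' 1" using s s' eX e_notin_G2 by auto
      moreover have "\<forall>x. s' \<le> x \<and> x < c \<longrightarrow> e x \<notin> topspace X - G s' 1"
      proof (intro allI impI)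
        fix x assume "s' \<le> x \<and> x < c"
        then have "e x \<in> G s' 1" using s s' c by (intro e_in_G) auto
        then show "e x \<notin> topspace X - G s' 1" by simp
      qed
      ultimately show ?thesis using s' by blast
    qed
  qed
  define V where "V y = (SOME V. \<exists>a. openin X V \<and> y \<in> V \<and> a < c \<and> (\<forall>x. a \<le> x \<and> x < c \<longrightarrow> e x \<notin> V))" for y
  have V: "\<exists>a. openin X (V y) \<and> y \<in> V y \<and> a < c \<and> (\<forall>x. a \<le> x \<and> x < c \<longrightarrow> e x \<notin> V y)" if "y \<in> K" for y
    unfolding V_def by (rule someI_ex[OF loc[OF that]])
  define A where "A y = (SOME a. a < c \<and> (\<forall>x. a \<le> x \<and> x < c \<longrightarrow> e x \<notin> V y))" for y
  have VA: "openin X (V y) \<and> y \<in> V y \<and> A y < c \<and> (\<forall>x. A y \<le> x \<and> x < c \<longrightarrow> e x \<notin> V y)" if "y \<in> K" for y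
  proof -
    have "\<exists>a. a < c \<and> (\<forall>x. a \<le> x \<and> x < c \<longrightarrow> e x \<notin> V y)" using V[OF that] by blast
    then have "A y < c \<and> (\<forall>x. A y \<le> x \<and> x < c \<longrightarrow> e x \<notin> V y)"
      unfolding A_def by (rule someI_ex)
    then show ?thesis using V[OF that] by blast
  qed
  have cov1: "K \<subseteq> \<Union>(V ` K)"
  proof
    fix y assume "y \<in> K" then show "y \<in> \<Union>(V ` K)" using VA[OF \<open>y \<in> K\<close>] by blast
  qed
  have cov2: "\<forall>U\<in>V ` K. openin X U"
  proof
    fix U assume "U \<in> V ` K" then obtain y where "y \<in> K" "U = V y" by blast
    then show "openin X U" using VA by simp
  qed
  have "(\<forall>U\<in>V ` K. openin X U) \<and> K \<subseteq> \<Union>(V ` K) \<longrightarrow> (\<exists>F. finite F \<and> F \<subseteq> V ` K \<and> K \<subseteq> \<Union>F)"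
    using Kc unfolding compactin_def by (rule conjunct2[THEN spec])
  then obtain F where F: "finite F" "F \<subseteq> V ` K" "K \<subseteq> \<Union>F"
    using cov1 cov2 by blast
  then obtain K' where K': "K' \<subseteq> K" "finite K'" "F = V ` K'"
    by (meson finite_subset_image)
  define a0 where "a0 = Max (insert r (A ` K'))"
  have fin: "finite (insert r (A ` K'))" using K' by simp
  have "\<forall>a\<in>insert r (A ` K'). a < c"
  proof
    fix a assume "a \<in> insert r (A ` K')"
    then show "a < c"
    proof
      assume "a = r" then show ?thesis using c by simp
    next
      assume "a \<in> A ` K'" then obtain y where "y \<in> K'" "a = A y" by blast
      then show ?thesis using VA[of y] K'(1) by blast
    qed
  qed
  then have a0c: "a0 < c" unfolding a0_def using fin by (subst Max_less_iff) auto
  have ra0: "r \<le> a0" unfolding a0_def using fin by simp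
  have Aa0: "A y \<le> a0" if "y \<in> K'" for y unfolding a0_def using fin that by simp
  define x where "x = (a0 + c) / 2"
  have x: "a0 < x" "x < c" using a0c unfolding x_def by auto
  have "e x \<in> N" using eN x ra0 by simp
  then have "e x \<in> X closure_of N" using closure_of_subset[OF openin_subset[OF N(1)]] by blast
  moreover have "e x \<in> E0" unfolding E0_def using x ra0 r c by simp
  then have "e x \<in> Y" using E0_sub_Y by blast
  ultimately have "e x \<in> K" unfolding K_def by simp
  then obtain y where y: "y \<in> K'" "e x \<in> V y" using F K' by auto
  have "A y \<le> x" using Aa0[OF y(1)] x by simp
  then have "e x \<notin> V y" using VA[of y] y K' x by auto
  then show False using y by simp
qed


lemma Y_closed: "closedin X Y"
  by (simp add: Y_def G_closed)

lemma Z_ne: "Z \<noteq> {}"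
proof -
  have "e 0 \<in> topspace X" using eX by simp
  then obtain t where "f t = e 0" using fs by (metis imageE)
  moreover have "e 0 \<in> Y" using E0_sub_Y by (auto simp: E0_def)
  ultimately have "t \<in> Z" by (simp add: Z_def)
  then show ?thesis by blast
qed

lemma countN: "countable (closure Z - Z)"
proof -
  define NN where "NN = closure Z - Z"
  have ex: "\<exists>d>0. \<forall>y. x \<le> y \<and> y < x + d \<longrightarrow> y \<notin> Z" if "x \<in> NN" for x
  proof -
    have "f x \<notin> Y" using that by (simp add: NN_def Z_def)
    then obtain d where "d>0" "\<forall>y. x \<le> y \<and> y < x + d \<longrightarrow> f y \<notin> Y"
      using avoid_closed[OF Y_closed] by blast
    then show ?thesis by (auto simp: Z_def)
  qed
  define d where "d x = (SOME d. d>0 \<and> (\<forall>y. x \<le> y \<and> y < x + d \<longrightarrow> y \<notin> Z))" for x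
  have d: "d x > 0 \<and> (\<forall>y. x \<le> y \<and> y < x + d x \<longrightarrow> y \<notin> Z)" if "x \<in> NN" for x
    unfolding d_def using someI_ex[OF ex[OF that]] by simp
  have sep: "x + d x \<le> x'" if "x \<in> NN" "x' \<in> NN" "x < x'" for x x'
  proof (rule ccontr)
    assume "\<not> x + d x \<le> x'"
    then have lt: "x' < x + d x" by simp
    have "x' \<in> closure Z" using that(2) by (simp add: NN_def)
    moreover have "0 < min (x' - x) (d x')" using d[OF that(2)] that(3) by simp
    ultimately obtain z where z: "z \<in> Z" "dist z x' < min (x' - x) (d x')"
      unfolding closure_approachable by blast
    then have z1: "x < z" "z < x' + d x'" by (auto simp: dist_real_def abs_less_iff)
    show False
    proof (cases "z < x'")
      case True
      then have "x \<le> z \<and> z < x + d x" using z1 lt by simp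
      then show False using d[OF that(1)] z(1) by blast
    next
      case False
      then have "x' \<le> z \<and> z < x' + d x'" using z1 by simp
      then show False using d[OF that(2)] z(1) by blast
    qed
  qed
  have exq: "\<exists>q\<in>\<rat>. x < q \<and> q < x + d x" if "x \<in> NN" for x
    using Rats_dense_in_real[of x "x + d x"] d[OF that] by auto
  define q where "q x = (SOME q. q \<in> \<rat> \<and> x < q \<and> q < x + d x)" for x
  have q: "q x \<in> \<rat> \<and> x < q x \<and> q x < x + d x" if "x \<in> NN" for x
    unfolding q_def using someI_ex[of "\<lambda>q. q \<in> \<rat> \<and> x < q \<and> q < x + d x"] exq[OF that] by blast
  have inj: "inj_on q NN"
  proof (rule inj_onI)
    fix x x' assume xx: "x \<in> NN" "x' \<in> NN" "q x = q x'"
    show "x = x'"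
    proof (rule ccontr)
      assume "x \<noteq> x'"
      then consider "x < x'" | "x' < x" by linarith
      then show False
      proof cases
        case 1
        then have "q x < q x'" using q[OF xx(1)] q[OF xx(2)] sep[OF xx(1,2) 1] by linarith
        then show False using xx by simp
      next
        case 2
        then have "q x' < q x" using q[OF xx(1)] q[OF xx(2)] sep[OF xx(2,1) 2] by linarith
        then show False using xx by simp
      qed
    qed
  qed
  have "q ` NN \<subseteq> \<rat>" using q by blast
  then have "countable (q ` NN)" using countable_rat countable_subset by blast
  then show ?thesis using inj countable_image_inj_on unfolding NN_def by blast
qed

lemma caseP:
  assumes n: "0 < n" and ab: "b - a < 1 / real n" and z: "z \<in> Z" "a < z" "z < b"
  and D: "\<And>u \<eta>. u \<in> Z \<Longrightarrow> a < u \<Longrightarrow> u < b \<Longrightarrow> 0 < \<eta> \<Longrightarrow> \<exists>p r. Pr n k p r \<and> u < p \<and> p < u + \<eta> \<and> p < b"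
  shows False
proof -
  have allE0: "f u \<in> E0" if u: "u \<in> Z" "a < u" "u < b" for u
  proof -
    define Rs where "Rs = {r. \<exists>t. Pr n k t r \<and> u < t \<and> t < b}"
    obtain p0 r0 where p0: "Pr n k p0 r0" "u < p0" "p0 < b" using D[OF u, of 1] by auto
    then have "r0 \<in> Rs" by (auto simp: Rs_def)
    have lb: "0 \<le> r" if "r \<in> Rs" for r using that by (auto simp: Rs_def Pr_def)
    have bdd: "bdd_below Rs" using lb by (meson bdd_below.I)
    define R where "R = Inf Rs"
    have R0: "0 \<le> R" unfolding R_def using \<open>r0 \<in> Rs\<close> lb by (metis cInf_greatest empty_iff)
    have R1: "R < 1" unfolding R_def using cInf_lower[OF \<open>r0 \<in> Rs\<close> bdd] p0(1) by (simp add: Pr_def)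
    show ?thesis
    proof (rule ccontr)
      assume nE: "f u \<notin> E0"
      have "e R \<in> E0" using R0 R1 by (simp add: E0_def)
      then have ne: "f u \<noteq> e R" using nE by auto
      obtain U V where UV: "openin X U" "openin X V" "f u \<in> U" "e R \<in> V" "U \<inter> V = {}"
        using Hsep[OF f_top eX[OF R0 R1] ne] by blast
      obtain d1 where d1: "d1>0" "\<forall>x. R \<le> x \<and> x < R + d1 \<and> x < 1 \<longrightarrow> e x \<in> V"
        using e1[OF R0 R1 UV(2,4)] by blast
      obtain d2 where d2: "d2>0" "\<forall>x. u \<le> x \<and> x < u + d2 \<longrightarrow> f x \<in> U"
        using f_right[OF UV(1,3)] by blast
      have "R < R + d1" using d1 by simp
      then obtain r1 where r1: "r1 \<in> Rs" "r1 < R + d1"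
        unfolding R_def using \<open>r0 \<in> Rs\<close> bdd by (metis cInf_lessD empty_iff)
      then obtain t1 where t1: "Pr n k t1 r1" "u < t1" "t1 < b" by (auto simp: Rs_def)
      have "0 < min d2 (t1 - u)" using d2 t1 by simp
      then obtain p r where p: "Pr n k p r" "u < p" "p < u + min d2 (t1 - u)" "p < b"
        using D[OF u] by blast
      have "p \<le> t1" using p by simp
      moreover have "t1 < p + 1/real n" using ab p t1 u by linarith
      ultimately have "r \<le> r1" using P_mono[OF p(1) t1(1)] by blast
      moreover have "r \<in> Rs" using p by (auto simp: Rs_def)
      then have "R \<le> r" unfolding R_def using bdd by (intro cInf_lower)
      moreover have "r < 1" "f p = e r" using p(1) by (auto simp: Pr_def)
      ultimately have "f p \<in> V" using d1(2) r1(2) by auto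
      moreover have "f p \<in> U" using d2(2) p by auto
      ultimately show False using UV(5) by blast
    qed
  qed
  define U0 where "U0 = f ` {a<..<b}"
  have "openin X U0" unfolding U0_def by (rule f_open_ivl)
  moreover have "U0 \<inter> Y \<subseteq> E0"
  proof
    fix y assume "y \<in> U0 \<inter> Y"
    then obtain u where "a < u" "u < b" "y = f u" "f u \<in> Y" unfolding U0_def by auto
    then show "y \<in> E0" using allE0[of u] by (auto simp: Z_def)
  qed
  moreover have "f z \<in> E0" using allE0 z by blast
  then obtain r where "0 \<le> r" "r < 1" "f z = e r" by (auto simp: E0_def)
  moreover have "f z \<in> U0" using z unfolding U0_def by auto
  ultimately show False using noLC by metis
qed

lemma caseM:
  assumes n: "0 < n" and ab: "b - a < 1 / real n" and z: "z \<in> Z" "a < z" "z < b"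
  and D: "\<And>u \<eta>. u \<in> Z \<Longrightarrow> a < u \<Longrightarrow> u < b \<Longrightarrow> 0 < \<eta> \<Longrightarrow> \<exists>p l. Ml n k p l \<and> u < p \<and> p < u + \<eta> \<and> p < b"
  shows False
proof -
  obtain t where t: "a < t" "t < b" "f t \<in> E0" using dense_E0[OF z] by blast
  then obtain r where r: "0 \<le> r" "r < 1" "f t = e r" by (auto simp: E0_def)
  have tZ: "t \<in> Z" using t E0_sub_Y by (auto simp: Z_def)
  obtain \<delta> where \<delta>: "\<delta> > 0" "\<forall>x. t \<le> x \<and> x < t + \<delta> \<longrightarrow> f x \<notin> G 0 r"
    using avoid_closed[OF G_closed, of t 0 r] e_notin_F[OF r(1,2)] r(3) by auto
  obtain u0 l0 where u0: "Ml n k u0 l0" "t < u0" "u0 < t + \<delta>" "u0 < b"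
    using D[OF tZ t(1,2) \<delta>(1)] by blast
  have "f u0 \<notin> G 0 r" using \<delta> u0 by auto
  moreover have "f u0 \<in> G 0 l0" using u0(1) by (simp add: Ml_def)
  ultimately have rl0: "r < l0" using G_mono[of 0 0 l0 r] by (metis not_less subsetD order_refl)
  define r'' where "r'' = (r + l0) / 2"
  have r'': "r < r''" "r'' < l0" using rl0 unfolding r''_def by auto
  have "f t \<in> G r'' 1"
  proof (rule ccontr)
    assume "f t \<notin> G r'' 1"
    then obtain d3 where d3: "d3 > 0" "\<forall>x. t \<le> x \<and> x < t + d3 \<longrightarrow> f x \<notin> G r'' 1"
      using avoid_closed[OF G_closed] by blast
    have "0 < min d3 (u0 - t)" using d3 u0 by simp
    then obtain u l where u: "Ml n k u l" "t < u" "u < t + min d3 (u0 - t)" "u < b"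
      using D[OF tZ t(1,2)] by blast
    have "u \<le> u0" using u by simp
    moreover have "u0 < u + 1/real n" using ab u u0 t by linarith
    ultimately have "l0 \<le> l" using M_mono[OF u(1) u0(1)] by blast
    have l1: "l \<le> 1" "f u \<in> G 0 l" "\<forall>l'<l. f u \<notin> G 0 l'" using u(1) by (auto simp: Ml_def)
    have "f u \<in> G 0 r'' \<union> G r'' l" using G_split l1(2) by blast
    moreover have "f u \<notin> G 0 r''" using l1(3) r'' \<open>l0 \<le> l\<close> by auto
    ultimately have "f u \<in> G r'' l" by blast
    then have "f u \<in> G r'' 1" using G_mono[of r'' r'' l 1] l1(1) by auto
    moreover have "f u \<notin> G r'' 1" using d3 u by auto
    ultimately show False by simp
  qed
  then show False using e_notin_G2[OF r(1) r''(1) r(2)] r(3) by simp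
qed


definition "PSet n k = {p. \<exists>r. Pr n k p r}"
definition "MSet n k = {p. \<exists>l. Ml n k p l}"

lemma localize:
  assumes A: "A = PSet n k \<or> A = MSet n k" and w: "w \<in> closure Z" and \<epsilon>: "0 < \<epsilon>"
  and H: "\<And>y. y \<in> closure Z \<Longrightarrow> dist y w < \<epsilon> \<Longrightarrow> y \<in> closure A"
  shows False
proof -
  have "w \<in> closure A" using H[OF w] \<epsilon> by simp
  then have "A \<noteq> {}" by auto
  then obtain p0 where "p0 \<in> A" by blast
  then have n: "0 < n" using A by (auto simp: PSet_def MSet_def Pr_def Ml_def)
  have "0 < \<epsilon>/2" using \<epsilon> by simp
  then obtain z where z: "z \<in> Z" "dist z w < \<epsilon>/2" using w unfolding closure_approachable by blast
  define \<rho> where "\<rho> = min (\<epsilon>/4) (1/(4 * real n))"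
  have \<rho>: "0 < \<rho>" "\<rho> \<le> \<epsilon>/4" "\<rho> \<le> 1/(4 * real n)" using \<epsilon> n unfolding \<rho>_def by auto
  define a where "a = z - \<rho>"
  define b where "b = z + \<rho>"
  have "1/(4 * real n) < 1/ real n" using n by (simp add: field_simps)
  then have ab: "b - a < 1/real n" unfolding a_def b_def using \<rho> by linarith
  have zab: "a < z" "z < b" unfolding a_def b_def using \<rho> by auto
  have D: "\<exists>p\<in>A. u < p \<and> p < u + \<eta> \<and> p < b" if u: "u \<in> Z" "a < u" "u < b" and \<eta>: "0 < \<eta>" for u \<eta>
  proof -
    define m where "m = min \<eta> (b - u)"
    have m: "0 < m" "m \<le> \<eta>" "m \<le> b - u" using u \<eta> unfolding m_def by auto
    obtain z' where z': "z' \<in> Z" "u < z'" "z' < u + m" using NRI[OF u(1) m(1)] by blast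
    have "dist z' w \<le> dist z' z + dist z w" by (rule dist_triangle)
    moreover have "dist z' z < \<rho>" using z' m u unfolding dist_real_def a_def b_def by auto
    ultimately have "dist z' w < \<epsilon>" using z(2) \<rho> by linarith
    moreover have "z' \<in> closure Z" using z'(1) closure_subset by blast
    ultimately have "z' \<in> closure A" using H by blast
    moreover have "0 < min (z' - u) (u + m - z')" using z' by simp
    ultimately obtain p where p: "p \<in> A" "dist p z' < min (z' - u) (u + m - z')"
      unfolding closure_approachable by blast
    then have "u < p" "p < u + m" by (auto simp: dist_real_def abs_less_iff)
    then show ?thesis using p(1) m by (intro bexI[of _ p]) auto
  qed
  from A show False
  proof
    assume A1: "A = PSet n k"
    show False
    proof (rule caseP[OF n ab z(1) zab])
      fix u \<eta> :: real assume "u \<in> Z" "a < u" "u < b" "0 < \<eta>"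
      from D[OF this] show "\<exists>p r. Pr n k p r \<and> u < p \<and> p < u + \<eta> \<and> p < b"
        unfolding A1 PSet_def by blast
    qed
  next
    assume A1: "A = MSet n k"
    show False
    proof (rule caseM[OF n ab z(1) zab])
      fix u \<eta> :: real assume "u \<in> Z" "a < u" "u < b" "0 < \<eta>"
      from D[OF this] show "\<exists>p l. Ml n k p l \<and> u < p \<and> p < u + \<eta> \<and> p < b"
        unfolding A1 MSet_def by blast
    qed
  qed
qed

theorem contradiction: False
proof -
  define NN where "NN = closure Z - Z"
  define \<A> where "\<A> = (\<lambda>(n,k). PSet n k) ` UNIV \<union> (\<lambda>(n,k). MSet n k) ` UNIV \<union> (\<lambda>x. {x}) ` NN"
  define \<G> where "\<G> = (\<lambda>A. closure Z - closure A) ` \<A>"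
  have cA: "countable \<A>" unfolding \<A>_def NN_def using countN by simp
  then have cG: "countable \<G>" unfolding \<G>_def by simp
  have opG: "openin (top_of_set (closure Z)) T" if "T \<in> \<G>" for T
  proof -
    have "T \<in> (\<lambda>A. closure Z - closure A) ` \<A>" using that by (simp add: \<G>_def)
    then obtain A where "T = closure Z - closure A" by (rule imageE)
    then have "T = closure Z \<inter> (- closure A)" by blast
    then show ?thesis by (auto simp: openin_open intro!: exI[of _ "- closure A"])
  qed
  have "\<exists>T\<in>\<G>. \<not> closure Z \<subseteq> closure T"
  proof (rule ccontr)
    assume "\<not> (\<exists>T\<in>\<G>. \<not> closure Z \<subseteq> closure T)"
    then have all: "\<And>T. T \<in> \<G> \<Longrightarrow> openin (top_of_set (closure Z)) T \<and> closure Z \<subseteq> closure T"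
      using opG by blast
    have "closure Z \<subseteq> closure (\<Inter>\<G>)" by (rule Baire[OF closed_closure cG all])
    moreover have "closure Z \<noteq> {}" using Z_ne by simp
    ultimately have "\<Inter>\<G> \<noteq> {}" by auto
    then obtain w where w: "w \<in> \<Inter>\<G>" by blast
    have GA: "w \<in> closure Z - closure A" if "A \<in> \<A>" for A
      using w that unfolding \<G>_def by blast
    have "PSet 0 0 \<in> \<A>" unfolding \<A>_def by blast
    from GA[OF this] have wZ: "w \<in> closure Z" by blast
    show False
    proof (cases "w \<in> Z")
      case True
      then obtain n k where "(\<exists>r. Pr n k w r) \<or> (\<exists>l. Ml n k w l)" using cover by blast
      then show False
      proof
        assume "\<exists>r. Pr n k w r"
        then have "w \<in> PSet n k" by (simp add: PSet_def)
        moreover have "PSet n k \<in> \<A>" unfolding \<A>_def by blast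
        ultimately show False using GA closure_subset by blast
      next
        assume "\<exists>l. Ml n k w l"
        then have "w \<in> MSet n k" by (simp add: MSet_def)
        moreover have "MSet n k \<in> \<A>" unfolding \<A>_def by blast
        ultimately show False using GA closure_subset by blast
      qed
    next
      case False
      then have "{w} \<in> \<A>" using wZ unfolding \<A>_def NN_def by blast
      from GA[OF this] show False by simp
    qed
  qed
  then obtain A where A: "A \<in> \<A>" "\<not> closure Z \<subseteq> closure (closure Z - closure A)"
    unfolding \<G>_def by blast
  then obtain w where w: "w \<in> closure Z" "w \<notin> closure (closure Z - closure A)" by blast
  then obtain \<epsilon> where \<epsilon>: "0 < \<epsilon>" "\<And>y. y \<in> closure Z - closure A \<Longrightarrow> \<not> dist y w < \<epsilon>"
    unfolding closure_approachable by (metis not_less)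
  have H: "y \<in> closure A" if "y \<in> closure Z" "dist y w < \<epsilon>" for y
    using \<epsilon>(2)[of y] that by blast
  from A(1) consider (P) n k where "A = PSet n k" | (M) n k where "A = MSet n k" | (N) x where "x \<in> NN" "A = {x}"
    unfolding \<A>_def by (auto split: prod.splits)
  then show False
  proof cases
    case (P n k) then show False using localize[OF _ w(1) \<epsilon>(1) H] by blast
  next
    case (M n k) then show False using localize[OF _ w(1) \<epsilon>(1) H] by blast
  next
    case (N x)
    have "w \<in> closure A" using H[OF w(1)] \<epsilon>(1) by simp
    then have wx: "w = x" using N by simp
    obtain z where z: "z \<in> Z" "dist z w < \<epsilon>" using w(1) \<epsilon>(1) unfolding closure_approachable by blast
    have "z \<in> closure A" using H[of z] z closure_subset by blast
    then have "z = x" using N by simp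
    then show False using z(1) N(1) unfolding NN_def by blast
  qed
qed

end


lemma emb_sep:
  assumes emb: "embedding_map sorgenfrey X e" and U: "openin sorgenfrey U" and x: "x \<in> U"
  shows "\<exists>V. openin X V \<and> e x \<in> V \<and> (\<forall>y. e y \<in> V \<longrightarrow> y \<in> U)"
proof -
  have H: "homeomorphic_map sorgenfrey (subtopology X (range e)) e"
    using emb by (simp add: embedding_map_def)
  have "openin (subtopology X (range e)) (e ` U)"
    using homeomorphic_imp_open_map[OF H] U by (simp add: open_map_def)
  then obtain V where V: "openin X V" "e ` U = V \<inter> range e" by (auto simp: openin_subtopology)
  have inj: "inj e" using homeomorphic_imp_injective_map[OF H] by simp
  have "e x \<in> V" using V x by blast
  moreover have "y \<in> U" if "e y \<in> V" for y
  proof -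
    have "e y \<in> e ` U" using V that by blast
    then show ?thesis using inj by (auto simp: inj_on_def)
  qed
  ultimately show ?thesis using V by blast
qed

lemma part1:
  fixes X :: "'a topology"
  assumes cpt: "compact_space X" and hd: "Hausdorff_space X" and emb: "embedding_map sorgenfrey X e"
  shows "\<not> continuous_open_image sorgenfrey X"
proof
  assume "continuous_open_image sorgenfrey X"
  then obtain f where f: "continuous_map sorgenfrey X f" "open_map sorgenfrey X f" "f ` UNIV = topspace X"
    unfolding continuous_open_image_def by auto
  have H: "homeomorphic_map sorgenfrey (subtopology X (range e)) e"
    using emb by (simp add: embedding_map_def)
  have ec: "continuous_map sorgenfrey X e"
    using homeomorphic_imp_continuous_map[OF H] continuous_map_in_subtopology by blast
  have inj: "inj e" using homeomorphic_imp_injective_map[OF H] by simp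
  have "SL X e f"
  proof (rule SL.intro)
    show "compact_space X" "Hausdorff_space X" "continuous_map sorgenfrey X f" "open_map sorgenfrey X f"
      "f ` UNIV = topspace X" by (fact cpt hd f)+
    show "e r \<in> topspace X" for r using ec by (simp add: continuous_map_def Pi_iff)
    show "inj_on e {0..<1}" using inj by (simp add: inj_on_def)
    show "\<exists>d>0. \<forall>x. r \<le> x \<and> x < r + d \<and> x < 1 \<longrightarrow> e x \<in> W" if "openin X W" "e r \<in> W" for r W
      using sorg_cont_right[OF ec that] by blast
    show "e r \<notin> X closure_of e ` {0..<r}" for r
    proof -
      obtain V where V: "openin X V" "e r \<in> V" "\<forall>y. e y \<in> V \<longrightarrow> y \<in> {r..}"
        using emb_sep[OF emb sorg_open_atLeast, of r] by auto
      show ?thesis by (rule notin_closure_ofI[OF V(1,2)]) (use V(3) in force)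
    qed
    show "e r \<notin> X closure_of e ` {s..<1}" if "0 \<le> r" "r < s" "r < 1" for r s
    proof -
      have "r \<in> {..<s}" using that(2) by simp
      then obtain V where V: "openin X V" "e r \<in> V" "\<forall>y. e y \<in> V \<longrightarrow> y \<in> {..<s}"
        using emb_sep[OF emb sorg_open_lessThan] by blast
      show ?thesis by (rule notin_closure_ofI[OF V(1,2)]) (use V(3) in force)
    qed
  qed
  then show False by (rule SL.contradiction)
qed


section \<open>Double arrow\<close>

lemma DA_mem: "p \<in> double_arrow_set \<longleftrightarrow> (snd p = 0 \<and> 0 < fst p \<and> fst p \<le> 1) \<or> (snd p = 1 \<and> 0 \<le> fst p \<and> fst p < 1)"
  by (cases p) (auto simp: double_arrow_set_def)

lemma lex_irrefl: "\<not> lex_less p p" by (simp add: lex_less_def)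
lemma lex_trans: "lex_less p q \<Longrightarrow> lex_less q r \<Longrightarrow> lex_less p r" by (auto simp: lex_less_def)
lemma lex_total: "p \<noteq> q \<Longrightarrow> lex_less p q \<or> lex_less q p"
  by (cases p, cases q) (auto simp: lex_less_def)
lemma lex_asym: "lex_less p q \<Longrightarrow> \<not> lex_less q p" by (auto simp: lex_less_def)

definition "DB = {double_arrow_set} \<union> {{p \<in> double_arrow_set. lex_less p a} | a. a \<in> double_arrow_set}
      \<union> {{p \<in> double_arrow_set. lex_less a p} | a. a \<in> double_arrow_set}"

lemma DA_eq: "double_arrow = topology_generated_by DB"
  by (simp add: double_arrow_def DB_def)

lemma DB_sub: "S \<in> DB \<Longrightarrow> S \<subseteq> double_arrow_set"
  by (auto simp: DB_def)

lemma DA_top: "topspace double_arrow = double_arrow_set"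
  unfolding DA_eq topology_generated_by_topspace using DB_sub by (auto simp: DB_def)

lemma DA_openL: "a \<in> double_arrow_set \<Longrightarrow> openin double_arrow {p \<in> double_arrow_set. lex_less p a}"
  unfolding DA_eq by (rule topology_generated_by_Basis) (unfold DB_def, blast)

lemma DA_openR: "a \<in> double_arrow_set \<Longrightarrow> openin double_arrow {p \<in> double_arrow_set. lex_less a p}"
  unfolding DA_eq by (rule topology_generated_by_Basis) (unfold DB_def, blast)

lemma DA_Hausdorff: "Hausdorff_space double_arrow"
proof -
  have sep: "\<exists>U V. openin double_arrow U \<and> openin double_arrow V \<and> p \<in> U \<and> q \<in> V \<and> disjnt U V"
    if pq: "p \<in> double_arrow_set" "q \<in> double_arrow_set" "lex_less p q" for p q
  proof (cases "\<exists>c\<in>double_arrow_set. lex_less p c \<and> lex_less c q")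
    case True
    then obtain c where c: "c \<in> double_arrow_set" "lex_less p c" "lex_less c q" by blast
    have "disjnt {w \<in> double_arrow_set. lex_less w c} {w \<in> double_arrow_set. lex_less c w}"
      using lex_asym unfolding disjnt_def by blast
    then show ?thesis using DA_openL[OF c(1)] DA_openR[OF c(1)] c pq by blast
  next
    case False
    have "disjnt {w \<in> double_arrow_set. lex_less w q} {w \<in> double_arrow_set. lex_less p w}"
      using False unfolding disjnt_def by blast
    then show ?thesis using DA_openL[OF pq(2)] DA_openR[OF pq(1)] pq by blast
  qed
  show ?thesis unfolding Hausdorff_space_def DA_top
  proof (intro allI impI)
    fix x y assume xy: "x \<in> double_arrow_set \<and> y \<in> double_arrow_set \<and> x \<noteq> y"
    then consider "lex_less x y" | "lex_less y x" using lex_total by blast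
    then show "\<exists>U V. openin double_arrow U \<and> openin double_arrow V \<and> x \<in> U \<and> y \<in> V \<and> disjnt U V"
    proof cases
      case 1 then show ?thesis using sep xy by blast
    next
      case 2 then obtain U V where "openin double_arrow U" "openin double_arrow V" "y \<in> U" "x \<in> V" "disjnt U V"
        using sep xy by blast
      then show ?thesis by (metis disjnt_sym)
    qed
  qed
qed

lemma DA_topology_eq:
  "double_arrow = topology (arbitrary union_of (finite intersection_of (\<lambda>x. x \<in> DB) relative_to double_arrow_set))"
proof -
  have "(finite' intersection_of (\<lambda>x. x \<in> DB)) A \<longleftrightarrow> (finite intersection_of (\<lambda>x. x \<in> DB) relative_to double_arrow_set) A" for A
  proof
    assume "(finite' intersection_of (\<lambda>x. x \<in> DB)) A"
    then obtain U where U: "finite U" "U \<noteq> {}" "U \<subseteq> DB" "\<Inter>U = A" by (auto simp: intersection_of_def)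
    then have "double_arrow_set \<inter> \<Inter>U = \<Inter>U" using DB_sub by blast
    then show "(finite intersection_of (\<lambda>x. x \<in> DB) relative_to double_arrow_set) A"
      unfolding relative_to_def intersection_of_def using U by auto
  next
    assume "(finite intersection_of (\<lambda>x. x \<in> DB) relative_to double_arrow_set) A"
    then obtain U where U: "finite U" "U \<subseteq> DB" "double_arrow_set \<inter> \<Inter>U = A"
      unfolding relative_to_def intersection_of_def by auto
    have "double_arrow_set \<in> DB" by (simp add: DB_def)
    then show "(finite' intersection_of (\<lambda>x. x \<in> DB)) A"
      unfolding intersection_of_def using U by (intro exI[of _ "insert double_arrow_set U"]) auto
  qed
  then have "finite' intersection_of (\<lambda>x. x \<in> DB) = finite intersection_of (\<lambda>x. x \<in> DB) relative_to double_arrow_set"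
    by (intro ext) simp
  then show ?thesis unfolding DA_eq generate_topology_on_eq by simp
qed

lemma DA_compact: "compact_space double_arrow"
proof (rule Alexander_subbase_alt[OF _ _ DA_topology_eq[symmetric]])
  show "double_arrow_set \<subseteq> \<Union>DB" by (auto simp: DB_def)
next
  fix C assume C: "C \<subseteq> DB" "double_arrow_set \<subseteq> \<Union>C"
  let ?D = double_arrow_set
  define L where "L a = {p \<in> ?D. lex_less p a}" for a
  define R where "R b = {p \<in> ?D. lex_less b p}" for b
  show "\<exists>C'. finite C' \<and> C' \<subseteq> C \<and> ?D \<subseteq> \<Union>C'"
  proof (cases "?D \<in> C")
    case True then show ?thesis by (intro exI[of _ "{?D}"]) auto
  next
    case False
    have Cform: "\<exists>a\<in>?D. S = L a \<or> S = R a" if "S \<in> C" for S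
    proof -
      have "S \<in> DB" using C(1) that by blast
      then have "S = ?D \<or> (\<exists>a. S = L a \<and> a \<in> ?D) \<or> (\<exists>a. S = R a \<and> a \<in> ?D)"
        unfolding DB_def L_def R_def by (simp add: Un_iff)
      moreover have "S \<noteq> ?D" using that False by blast
      ultimately show ?thesis by blast
    qed
    define A where "A = {a \<in> ?D. L a \<in> C}"
    have m: "(0::real, 1::nat) \<in> ?D" by (simp add: DA_mem)
    then obtain S where S: "S \<in> C" "(0, 1) \<in> S" using C(2) by blast
    then obtain a where a: "a \<in> ?D" "S = L a \<or> S = R a" using Cform by blast
    have "\<not> lex_less b (0, 1)" if "b \<in> ?D" for b using that by (auto simp: DA_mem lex_less_def)
    moreover have "S \<noteq> R a"
    proof
      assume "S = R a" then have "lex_less a (0, 1)" using S by (simp add: R_def)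
      then show False using \<open>\<And>b. b \<in> ?D \<Longrightarrow> \<not> lex_less b (0, 1)\<close> a(1) by blast
    qed
    ultimately have "S = L a" using a(2) by blast
    then have "a \<in> A" using a S by (simp add: A_def)
    then have Ane: "A \<noteq> {}" by blast
    have fstA: "0 \<le> fst a \<and> fst a \<le> 1" if "a \<in> A" for a using that by (auto simp: A_def DA_mem)
    have bdd: "bdd_above (fst ` A)" using fstA by (meson bdd_aboveI2)
    define s where "s = Sup (fst ` A)"
    have ub: "fst a \<le> s" if "a \<in> A" for a unfolding s_def using bdd that by (intro cSup_upper) auto
    define \<alpha> where "\<alpha> = (if (s, 1) \<in> A then (s, 1::nat) else (s, 0))"
    have ii: "\<not> lex_less \<alpha> a" if "a \<in> A" for a
    proof
      assume lt: "lex_less \<alpha> a"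
      have "fst \<alpha> = s" by (simp add: \<alpha>_def)
      then have "fst a = s" "snd \<alpha> < snd a" using lt ub[OF that] by (auto simp: lex_less_def)
      moreover have "snd a \<le> 1" using that by (auto simp: A_def DA_mem)
      ultimately have "snd a = 1" "snd \<alpha> = 0" by (auto simp: \<alpha>_def split: if_splits)
      then have "(s, 1) \<notin> A" by (auto simp: \<alpha>_def split: if_splits)
      moreover have "a = (s, 1)" using \<open>fst a = s\<close> \<open>snd a = 1\<close> by (cases a) auto
      ultimately show False using that by simp
    qed
    have iii: "\<exists>a\<in>A. lex_less b a" if "lex_less b \<alpha>" for b
    proof (cases "fst b < s")
      case True
      have "fst ` A \<noteq> {}" using Ane by simp
      then have "\<exists>x\<in>fst ` A. fst b < x" using less_cSup_iff[of "fst ` A" "fst b"] bdd True unfolding s_def by blast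
      then obtain a where "a \<in> A" "fst b < fst a" by blast
      then show ?thesis by (auto simp: lex_less_def)
    next
      case False
      have fa: "fst \<alpha> = s" by (simp add: \<alpha>_def)
      have "fst b = s \<and> snd b < snd \<alpha>" using that False fa unfolding lex_less_def by linarith
      then have fb: "fst b = s" "snd b < snd \<alpha>" by auto
      have "(s, 1) \<in> A"
      proof (rule ccontr)
        assume "(s, 1) \<notin> A"
        then have "snd \<alpha> = 0" by (simp add: \<alpha>_def)
        then show False using fb(2) by simp
      qed
      then have "snd \<alpha> = 1" by (simp add: \<alpha>_def)
      then have "snd b < 1" using fb(2) by simp
      then show ?thesis using \<open>fst b = s\<close> \<open>(s, 1) \<in> A\<close> by (intro bexI[of _ "(s,1)"]) (auto simp: lex_less_def)
    qed
    have i: "\<alpha> \<in> ?D"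
    proof (cases "(s, 1) \<in> A")
      case True then show ?thesis by (simp add: \<alpha>_def A_def)
    next
      case False
      have "s \<le> 1" unfolding s_def using Ane fstA by (intro cSup_least) auto
      moreover have "0 < s"
      proof (rule ccontr)
        assume "\<not> 0 < s"
        obtain a0 where a0: "a0 \<in> A" using Ane by blast
        then have "fst a0 = 0" using ub[OF a0] fstA[OF a0] \<open>\<not> 0 < s\<close> by linarith
        then have "a0 = (0, 1)" using a0 by (cases a0) (auto simp: A_def DA_mem)
        moreover have "s = 0" using ub[OF a0] fstA[OF a0] \<open>\<not> 0 < s\<close> by linarith
        ultimately show False using False a0 by simp
      qed
      ultimately show ?thesis using False by (simp add: \<alpha>_def DA_mem)
    qed
    then obtain S' where S': "S' \<in> C" "\<alpha> \<in> S'" using C(2) by blast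
    then obtain c where c: "c \<in> ?D" "S' = L c \<or> S' = R c" using Cform by blast
    show ?thesis
    proof (cases "S' = L c")
      case True
      then have "c \<in> A" "lex_less \<alpha> c" using S' c by (auto simp: A_def L_def)
      then show ?thesis using ii by blast
    next
      case False
      then have Rc: "S' = R c" "lex_less c \<alpha>" using c S' by (auto simp: R_def)
      then obtain a where a: "a \<in> A" "lex_less c a" using iii by blast
      have "?D \<subseteq> L a \<union> R c"
      proof
        fix p assume p: "p \<in> ?D"
        show "p \<in> L a \<union> R c"
        proof (cases "lex_less p a")
          case True then show ?thesis using p by (simp add: L_def)
        next
          case False
          have "lex_less c p"
          proof (cases "p = a")
            case True then show ?thesis using a(2) by simp
          next
            case False
            then have "lex_less a p" using lex_total \<open>\<not> lex_less p a\<close> by blast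
            then show ?thesis using a(2) lex_trans by blast
          qed
          then show ?thesis using p by (simp add: R_def)
        qed
      qed
      moreover have "L a \<in> C" using a by (simp add: A_def)
      ultimately show ?thesis using Rc S' by (intro exI[of _ "{L a, R c}"]) auto
    qed
  qed
qed

lemma DA_e1:
  assumes "openin double_arrow W"
  shows "\<forall>r. 0 \<le> r \<longrightarrow> r < 1 \<longrightarrow> (r, 1::nat) \<in> W \<longrightarrow> (\<exists>d>0. \<forall>x. r \<le> x \<and> x < r + d \<and> x < 1 \<longrightarrow> (x, 1) \<in> W)"
proof -
  have "generate_topology_on DB W" using assms unfolding DA_eq by (rule openin_topology_generated_by)
  then show ?thesis
  proof induction
    case Empty then show ?case by simp
  next
    case (Int a b)
    show ?case
    proof (intro allI impI)
      fix r :: real assume r: "0 \<le> r" "r < 1" "(r, 1::nat) \<in> a \<inter> b"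
      obtain d1 where "d1 > 0" "\<forall>x. r \<le> x \<and> x < r + d1 \<and> x < 1 \<longrightarrow> (x, 1::nat) \<in> a" using Int.IH(1) r by blast
      moreover obtain d2 where "d2 > 0" "\<forall>x. r \<le> x \<and> x < r + d2 \<and> x < 1 \<longrightarrow> (x, 1::nat) \<in> b" using Int.IH(2) r by blast
      ultimately show "\<exists>d>0. \<forall>x. r \<le> x \<and> x < r + d \<and> x < 1 \<longrightarrow> (x, 1) \<in> a \<inter> b"
        by (intro exI[of _ "min d1 d2"]) auto
    qed
  next
    case (UN K)
    show ?case
    proof (intro allI impI)
      fix r :: real assume r: "0 \<le> r" "r < 1" "(r, 1::nat) \<in> \<Union>K"
      then obtain k where "k \<in> K" "(r, 1::nat) \<in> k" by blast
      then obtain d where "d > 0" "\<forall>x. r \<le> x \<and> x < r + d \<and> x < 1 \<longrightarrow> (x, 1::nat) \<in> k" using UN.IH r by blast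
      then show "\<exists>d>0. \<forall>x. r \<le> x \<and> x < r + d \<and> x < 1 \<longrightarrow> (x, 1) \<in> \<Union>K" using \<open>k \<in> K\<close> by blast
    qed
  next
    case (Basis s)
    show ?case
    proof (intro allI impI)
      fix r :: real assume r: "0 \<le> r" "r < 1" "(r, 1::nat) \<in> s"
      have mem: "(x, 1::nat) \<in> double_arrow_set" if "0 \<le> x" "x < 1" for x using that by (simp add: DA_mem)
      from Basis consider "s = double_arrow_set" | a where "a \<in> double_arrow_set" "s = {p \<in> double_arrow_set. lex_less p a}"
        | a where "a \<in> double_arrow_set" "s = {p \<in> double_arrow_set. lex_less a p}" unfolding DB_def by blast
      then show "\<exists>d>0. \<forall>x. r \<le> x \<and> x < r + d \<and> x < 1 \<longrightarrow> (x, 1) \<in> s"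
      proof cases
        case 1 then show ?thesis using mem r by (intro exI[of _ 1]) auto
      next
        case (2 a)
        then have "lex_less (r, 1) a" using r by simp
        moreover have "snd a \<le> 1" using 2 by (auto simp: DA_mem)
        ultimately have ra: "r < fst a" by (auto simp: lex_less_def)
        show ?thesis
        proof (intro exI[of _ "fst a - r"] conjI allI impI)
          fix x assume "r \<le> x \<and> x < r + (fst a - r) \<and> x < 1"
          then show "(x, 1) \<in> s" using 2 mem r by (auto simp: lex_less_def)
        qed (use ra in simp)
      next
        case (3 a)
        then have ar: "lex_less a (r, 1)" using r by simp
        show ?thesis
        proof (intro exI[of _ 1] conjI allI impI)
          fix x assume x: "r \<le> x \<and> x < r + 1 \<and> x < 1"
          then have "lex_less a (x, 1)" using ar by (auto simp: lex_less_def)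
          then show "(x, 1) \<in> s" using 3 mem r x by auto
        qed simp
      qed
    qed
  qed
qed

lemma part2: "\<not> continuous_open_image sorgenfrey double_arrow"
proof
  assume "continuous_open_image sorgenfrey double_arrow"
  then obtain f where f: "continuous_map sorgenfrey double_arrow f" "open_map sorgenfrey double_arrow f"
      "f ` UNIV = topspace double_arrow"
    unfolding continuous_open_image_def by auto
  define e where "e r = (r, 1::nat)" for r :: real
  have "SL double_arrow e f"
  proof (rule SL.intro)
    show "compact_space double_arrow" by (rule DA_compact)
    show "Hausdorff_space double_arrow" by (rule DA_Hausdorff)
    show "continuous_map sorgenfrey double_arrow f" "open_map sorgenfrey double_arrow f"
      "f ` UNIV = topspace double_arrow" by (fact f)+
    show "e r \<in> topspace double_arrow" if "0 \<le> r" "r < 1" for r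
      using that by (simp add: DA_top DA_mem e_def)
    show "inj_on e {0..<1}" by (simp add: inj_on_def e_def)
    show "\<exists>d>0. \<forall>x. r \<le> x \<and> x < r + d \<and> x < 1 \<longrightarrow> e x \<in> W"
      if "0 \<le> r" "r < 1" "openin double_arrow W" "e r \<in> W" for r W
      using DA_e1[OF that(3)] that unfolding e_def by blast
    show "e r \<notin> double_arrow closure_of e ` {0..<r}" if "0 \<le> r" "r < 1" for r
    proof (cases "r = 0")
      case True then show ?thesis by simp
    next
      case False
      have rD: "(r, 0::nat) \<in> double_arrow_set" using that False by (simp add: DA_mem)
      show ?thesis
      proof (rule notin_closure_ofI[OF DA_openR[OF rD]])
        show "e r \<in> {p \<in> double_arrow_set. lex_less (r, 0) p}" using that by (simp add: e_def DA_mem lex_less_def)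
        show "{p \<in> double_arrow_set. lex_less (r, 0) p} \<inter> e ` {0..<r} = {}"
          by (auto simp: e_def lex_less_def)
      qed
    qed
    show "e r \<notin> double_arrow closure_of e ` {s..<1}" if "0 \<le> r" "r < s" "r < 1" for r s
    proof (cases "s < 1")
      case False then show ?thesis by simp
    next
      case True
      have sD: "(s, 0::nat) \<in> double_arrow_set" using that True by (simp add: DA_mem)
      show ?thesis
      proof (rule notin_closure_ofI[OF DA_openL[OF sD]])
        show "e r \<in> {p \<in> double_arrow_set. lex_less p (s, 0)}" using that by (simp add: e_def DA_mem lex_less_def)
        show "{p \<in> double_arrow_set. lex_less p (s, 0)} \<inter> e ` {s..<1} = {}"
          by (auto simp: e_def lex_less_def)
      qed
    qed
  qed
  then show False by (rule SL.contradiction)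
qed

theorem mainTheorem17:
  shows "(\<forall>X :: 'a topology.
            compact_space X \<and> Hausdorff_space X \<and> (\<exists>e. embedding_map sorgenfrey X e)
            \<longrightarrow> \<not> continuous_open_image sorgenfrey X)
         \<and> \<not> continuous_open_image sorgenfrey double_arrow"
  using part1 part2 by blast

end
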